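(* Let $Y$ be a locally compact metrizable space and let $\Phi\colon\mathbb{R}\curvearrowright Y$ be a continuous action with bounded periods. Then the orbit space $Y/\mathbb{R}$ is metrizable.
   Context: The action has bounded periods if there is $R>0$ such that for every $y\in Y$ the orbit $\Phi_{\mathbb{R}}(y)$ equals $\{\Phi_t(y): t\in[0,R]\}$. $Y/\mathbb{R}$ carries the quotient topology. *)

theory Defs
  imports "HOL-Analysis.Analysis"
begin

definition continuous_real_action :: "'a topology \<Rightarrow> (real \<Rightarrow> 'a \<Rightarrow> 'a) \<Rightarrow> bool" where
  "continuous_real_action X \<Phi> \<longleftrightarrow>
     continuous_map (prod_topology euclideanreal X) X (\<lambda>(t, y). \<Phi> t y) \<and>
     (\<forall>y\<in>topspace X. \<Phi> 0 y = y) \<and>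
     (\<forall>s t. \<forall>y\<in>topspace X. \<Phi> (s + t) y = \<Phi> s (\<Phi> t y))"

definition orbit :: "(real \<Rightarrow> 'a \<Rightarrow> 'a) \<Rightarrow> 'a \<Rightarrow> 'a set" where
  "orbit \<Phi> y = {\<Phi> t y | t. True}"

definition bounded_periods :: "'a topology \<Rightarrow> (real \<Rightarrow> 'a \<Rightarrow> 'a) \<Rightarrow> bool" where
  "bounded_periods X \<Phi> \<longleftrightarrow>
     (\<exists>R>0. \<forall>y\<in>topspace X. orbit \<Phi> y = {\<Phi> t y | t. t \<in> {0..R}})"

text \<open>The orbit space Y/R with the quotient topology of the map y \<mapsto> orbit y:
  its points are the orbits, and a set U of orbits is open iff the union of U
  (the preimage of U under the quotient map) is open in X.\<close>
definition orbit_space :: "'a topology \<Rightarrow> (real \<Rightarrow> 'a \<Rightarrow> 'a) \<Rightarrow> 'a set topology" where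
  "orbit_space X \<Phi> =
     topology (\<lambda>U. U \<subseteq> orbit \<Phi> ` topspace X \<and> openin X {y \<in> topspace X. orbit \<Phi> y \<in> U})"

end

theory Submission
  imports Defs
begin

lemma openin_orbit_space:
  "openin (orbit_space X \<Phi>) U \<longleftrightarrow>
     U \<subseteq> orbit \<Phi> ` topspace X \<and> openin X {y \<in> topspace X. orbit \<Phi> y \<in> U}"
proof -
  have "istopology (\<lambda>U. U \<subseteq> orbit \<Phi> ` topspace X \<and> openin X {y \<in> topspace X. orbit \<Phi> y \<in> U})"
    unfolding istopology_def
  proof (rule conjI; intro allI impI)
    fix S T
    assume S: "S \<subseteq> orbit \<Phi> ` topspace X \<and> openin X {y \<in> topspace X. orbit \<Phi> y \<in> S}"
      and T: "T \<subseteq> orbit \<Phi> ` topspace X \<and> openin X {y \<in> topspace X. orbit \<Phi> y \<in> T}"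
    have "{y \<in> topspace X. orbit \<Phi> y \<in> S \<inter> T} = {y \<in> topspace X. orbit \<Phi> y \<in> S} \<inter> {y \<in> topspace X. orbit \<Phi> y \<in> T}"
      by auto
    then show "S \<inter> T \<subseteq> orbit \<Phi> ` topspace X \<and> openin X {y \<in> topspace X. orbit \<Phi> y \<in> S \<inter> T}"
      using S T by auto
  next
    fix K
    assume K: "\<forall>S\<in>K. S \<subseteq> orbit \<Phi> ` topspace X \<and> openin X {y \<in> topspace X. orbit \<Phi> y \<in> S}"
    have "{y \<in> topspace X. orbit \<Phi> y \<in> \<Union>K} = (\<Union>S\<in>K. {y \<in> topspace X. orbit \<Phi> y \<in> S})"
      by auto
    then show "\<Union>K \<subseteq> orbit \<Phi> ` topspace X \<and> openin X {y \<in> topspace X. orbit \<Phi> y \<in> \<Union>K}"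
      using K by auto
  qed
  then show ?thesis
    unfolding orbit_space_def by simp
qed

theorem lemma5p2:
  fixes X :: "'a topology" and \<Phi> :: "real \<Rightarrow> 'a \<Rightarrow> 'a"
  assumes "locally_compact_space X"
    and "metrizable_space X"
    and "continuous_real_action X \<Phi>"
    and "bounded_periods X \<Phi>"
  shows "metrizable_space (orbit_space X \<Phi>)"
proof -
  obtain M d where Md: "Metric_space M d" and XM: "X = Metric_space.mtopology M d"
    using assms(2) metrizable_space_def by blast
  interpret Metric_space M d by (rule Md)
  have topX: "topspace X = M" using XM by simp
  obtain R where R: "R > 0" "\<forall>y\<in>M. orbit \<Phi> y = {\<Phi> t y |t. t \<in> {0..R}}"
    using assms(4) unfolding bounded_periods_def topX by blast
  have cont: "continuous_map (prod_topology euclideanreal mtopology) mtopology (\<lambda>(t, y). \<Phi> t y)"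
    and act0: "\<And>y. y \<in> M \<Longrightarrow> \<Phi> 0 y = y"
    and actadd: "\<And>s t y. y \<in> M \<Longrightarrow> \<Phi> (s + t) y = \<Phi> s (\<Phi> t y)"
    using assms(3) XM unfolding continuous_real_action_def by auto
  have PhiM: "\<Phi> t y \<in> M" if "y \<in> M" for t y
    using continuous_map_image_subset_topspace[OF cont] that by force
  have orbR: "orbit \<Phi> y = (\<lambda>t. \<Phi> t y) ` {0..R}" if "y \<in> M" for y
    using R(2) that by auto
  have self: "y \<in> orbit \<Phi> y" if "y \<in> M" for y
    using act0[OF that] unfolding orbit_def by (metis (mono_tags, lifting) mem_Collect_eq)
  have orbM: "orbit \<Phi> y \<subseteq> M" if "y \<in> M" for y
    using PhiM that unfolding orbit_def by auto
  have orb_shift: "orbit \<Phi> (\<Phi> t y) = orbit \<Phi> y" if "y \<in> M" for t y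
  proof -
    have "orbit \<Phi> (\<Phi> t y) = {\<Phi> (s + t) y |s. True}"
      unfolding orbit_def using actadd[OF that] by auto
    also have "\<dots> = orbit \<Phi> y"
      unfolding orbit_def by (auto, metis diff_add_cancel)
    finally show ?thesis .
  qed
  have orb_mem: "orbit \<Phi> z = orbit \<Phi> y" if yz: "y \<in> M" "z \<in> orbit \<Phi> y" for y z
  proof -
    obtain t where "z = \<Phi> t y" using yz(2) unfolding orbit_def by auto
    then show ?thesis using orb_shift[OF yz(1)] by simp
  qed
  have orb_compact: "compactin mtopology (orbit \<Phi> y)" if "y \<in> M" for y
  proof -
    have "continuous_map euclideanreal mtopology (\<lambda>t. \<Phi> t y)"
    proof -
      have "continuous_map euclideanreal (prod_topology euclideanreal mtopology) (\<lambda>t. (t, y))"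
        using that by (simp add: continuous_map_pairwise o_def)
      from continuous_map_compose[OF this cont] show ?thesis by (simp add: o_def)
    qed
    moreover have "compactin euclideanreal {0..R}"
      by (simp add: compactin_euclidean_iff)
    ultimately show ?thesis
      using image_compactin orbR[OF that] by metis
  qed
  have orb_closed: "closedin mtopology (orbit \<Phi> y)" if "y \<in> M" for y
    using orb_compact[OF that] compactin_imp_closedin Hausdorff_space_mtopology by blast

  define e where "e z a = min 1 (d z a)" for z a
  define g where "g z Q = Inf (e z ` Q)" for z Q
  define P where "P = orbit \<Phi> ` M"
  define D where "D O1 O2 = (if O1 \<in> P \<and> O2 \<in> P then (SUP z\<in>M. \<bar>g z O1 - g z O2\<bar>) else 0)" for O1 O2

  have e_ge: "0 \<le> e z a" for z a unfolding e_def by simp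
  have e_le: "e z a \<le> 1" for z a unfolding e_def by simp
  have e_tri: "e z b \<le> e z a + d a b" if "z \<in> M" "a \<in> M" "b \<in> M" for z a b
    using triangle[OF that(1,2,3)] nonneg[of a b] unfolding e_def by linarith
  have P_ne: "Q \<noteq> {}" "Q \<subseteq> M" if "Q \<in> P" for Q
    using that self orbM unfolding P_def by auto
  have gle: "g z Q \<le> e z b" if "b \<in> Q" for z Q b
    unfolding g_def using that e_ge by (intro cInf_lower) (auto intro!: bdd_belowI[where m=0])
  have gge: "0 \<le> g z Q" if "Q \<noteq> {}" for z Q
    unfolding g_def using that e_ge by (intro cInf_greatest) auto
  have gle1: "g z Q \<le> 1" if "Q \<noteq> {}" for z Q
    using that gle e_le by (meson dual_order.trans ex_in_conv)
  have bdd: "bdd_above ((\<lambda>z. \<bar>g z A - g z B\<bar>) ` M)" if "A \<in> P" "B \<in> P" for A B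
  proof (rule bdd_aboveI2)
    fix z show "\<bar>g z A - g z B\<bar> \<le> 1"
      using gge gle1 P_ne that by (smt (verit))
  qed
  have MneP: "M \<noteq> {}" if "A \<in> P" for A using that P_ne by auto
  have Dge: "\<bar>g z A - g z B\<bar> \<le> D A B" if "A \<in> P" "B \<in> P" "z \<in> M" for A B z
    unfolding D_def using that bdd[OF that(1,2)] by (auto intro: cSUP_upper)
  have Dle: "D A B \<le> c" if "A \<in> P" "B \<in> P" "\<And>z. z \<in> M \<Longrightarrow> \<bar>g z A - g z B\<bar> \<le> c" for A B c
    unfolding D_def using that MneP[OF that(1)] by (auto intro: cSUP_least)

  have gzero: "g a A = 0" if "A \<in> P" "a \<in> A" for a A
  proof -
    have "a \<in> M" using that P_ne by auto
    then have "e a a = 0" unfolding e_def by simp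
    then show ?thesis using gle[OF that(2), of a] gge[OF P_ne(1)[OF that(1)], of a] by simp
  qed
  have gpos: "0 < g a A" if asm: "A \<in> P" "a \<in> M" "a \<notin> A" for a A
  proof -
    obtain y where y: "y \<in> M" "A = orbit \<Phi> y" using asm(1) P_def by auto
    have op: "openin mtopology (M - A)" using orb_closed[OF y(1)] y(2) by (simp add: closedin_def)
    have aMA: "a \<in> M - A" using asm(2,3) by simp
    obtain \<epsilon> where \<epsilon>: "\<epsilon> > 0" "mball a \<epsilon> \<subseteq> M - A"
      using op[unfolded openin_mtopology] aMA by metis
    have "min 1 \<epsilon> \<le> g a A"
      unfolding g_def
    proof (rule cInf_greatest)
      show "e a ` A \<noteq> {}" using P_ne[OF asm(1)] by auto
      fix v assume "v \<in> e a ` A"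
      then obtain b where b: "b \<in> A" "v = e a b" by auto
      have "b \<in> M" using b P_ne[OF asm(1)] by auto
      then have "\<not> d a b < \<epsilon>" using \<epsilon>(2) b(1) asm(2) by auto
      then show "min 1 \<epsilon> \<le> v" using b(2) unfolding e_def by auto
    qed
    then show ?thesis using \<epsilon>(1) by linarith
  qed

  have gclose: "g z (orbit \<Phi> y) \<le> g z (orbit \<Phi> x) + c"
    if "x \<in> M" "y \<in> M" "z \<in> M" "\<And>t. t \<in> {0..R} \<Longrightarrow> d (\<Phi> t x) (\<Phi> t y) \<le> c" for x y z c
  proof -
    have "g z (orbit \<Phi> y) - c \<le> Inf (e z ` (\<lambda>t. \<Phi> t x) ` {0..R})"
    proof (rule cInf_greatest)
      show "e z ` (\<lambda>t. \<Phi> t x) ` {0..R} \<noteq> {}" using R(1) by auto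
      fix v assume "v \<in> e z ` (\<lambda>t. \<Phi> t x) ` {0..R}"
      then obtain t where t: "t \<in> {0..R}" "v = e z (\<Phi> t x)" by auto
      have "g z (orbit \<Phi> y) \<le> e z (\<Phi> t y)"
        using gle t(1) orbR[OF that(2)] by auto
      also have "\<dots> \<le> e z (\<Phi> t x) + d (\<Phi> t x) (\<Phi> t y)"
        using e_tri PhiM that by auto
      also have "\<dots> \<le> v + c" using that(4)[OF t(1)] t(2) by simp
      finally show "g z (orbit \<Phi> y) - c \<le> v" by simp
    qed
    moreover have "g z (orbit \<Phi> x) = Inf (e z ` (\<lambda>t. \<Phi> t x) ` {0..R})"
      using orbR[OF that(1)] g_def by metis
    ultimately show ?thesis by simp
  qed

  have MPD: "Metric_space P D"
  proof
    fix A B show "0 \<le> D A B"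
    proof (cases "A \<in> P \<and> B \<in> P")
      case True
      then obtain z where "z \<in> M" using MneP by blast
      then show ?thesis using Dge[of A B z] True by (smt (verit))
    qed (auto simp add: D_def)
  next
    fix A B show "D A B = D B A"
      unfolding D_def by (auto simp: abs_minus_commute)
  next
    fix A B assume AB: "A \<in> P" "B \<in> P"
    show "D A B = 0 \<longleftrightarrow> A = B"
    proof
      assume "A = B"
      then have "D A B \<le> 0" using AB by (intro Dle) auto
      moreover obtain z where "z \<in> M" using MneP AB by blast
      ultimately show "D A B = 0" using Dge[OF AB, of z] by (smt (verit))
    next
      assume D0: "D A B = 0"
      have sub: "A' \<subseteq> B'" if "A' \<in> P" "B' \<in> P" "D A' B' = 0" for A' B'
      proof
        fix a assume a: "a \<in> A'"
        have aM: "a \<in> M" using a P_ne that by auto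
        have "\<bar>g a A' - g a B'\<bar> \<le> 0" using Dge[OF that(1,2) aM] that(3) by simp
        then have "g a B' = 0" using gzero[OF that(1) a] by simp
        then show "a \<in> B'" using gpos[OF that(2) aM] by force
      qed
      have "D B A = 0" using D0 unfolding D_def by (auto simp: abs_minus_commute)
      then show "A = B" using sub AB D0 by blast
    qed
  next
    fix A B C assume ABC: "A \<in> P" "B \<in> P" "C \<in> P"
    show "D A C \<le> D A B + D B C"
    proof (rule Dle[OF ABC(1,3)])
      fix z assume z: "z \<in> M"
      have "\<bar>g z A - g z C\<bar> \<le> \<bar>g z A - g z B\<bar> + \<bar>g z B - g z C\<bar>" by linarith
      then show "\<bar>g z A - g z C\<bar> \<le> D A B + D B C"
        using Dge[OF ABC(1,2) z] Dge[OF ABC(2,3) z] by linarith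
    qed
  qed
  interpret PD: Metric_space P D by (rule MPD)

  have "orbit_space X \<Phi> = PD.mtopology"
  proof (rule topology_eq[THEN iffD2], intro allI)
    fix U
    show "openin (orbit_space X \<Phi>) U \<longleftrightarrow> openin PD.mtopology U"
    proof
      assume "openin (orbit_space X \<Phi>) U"
      then have UP: "U \<subseteq> P" and Wopen: "openin mtopology {y \<in> M. orbit \<Phi> y \<in> U}"
        unfolding openin_orbit_space topX P_def using XM by auto
      show "openin PD.mtopology U"
        unfolding PD.openin_mtopology
      proof (intro conjI UP allI impI)
        fix Q assume OU: "Q \<in> U"
        then obtain x where x: "x \<in> M" "Q = orbit \<Phi> x" using UP P_def by auto
        have OW: "Q \<subseteq> {y \<in> M. orbit \<Phi> y \<in> U}"
        proof
          fix b assume bQ: "b \<in> Q"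
          have "b \<in> M" using orbM[OF x(1)] x(2) bQ by blast
          moreover have "orbit \<Phi> b = Q" using orb_mem[OF x(1)] bQ x(2) by blast
          ultimately show "b \<in> {y \<in> M. orbit \<Phi> y \<in> U}" using OU by simp
        qed
        have "\<exists>\<epsilon>>0. \<forall>b\<in>orbit \<Phi> x. \<exists>W\<in>{{y \<in> M. orbit \<Phi> y \<in> U}}. mball b \<epsilon> \<subseteq> W"
        proof (rule lebesgue_number[OF orb_compact[OF x(1)]])
          show "orbit \<Phi> x \<subseteq> \<Union> {{y \<in> M. orbit \<Phi> y \<in> U}}" using OW x(2) by simp
          show "\<And>W. W \<in> {{y \<in> M. orbit \<Phi> y \<in> U}} \<Longrightarrow> openin mtopology W" using Wopen by simp
        qed
        then obtain \<epsilon> where \<epsilon>: "\<epsilon> > 0" "\<forall>b\<in>Q. mball b \<epsilon> \<subseteq> {y \<in> M. orbit \<Phi> y \<in> U}"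
          using x(2) by auto
        show "\<exists>r>0. PD.mball Q r \<subseteq> U"
        proof (intro exI conjI)
          show "0 < min 1 \<epsilon>" using \<epsilon>(1) by simp
          show "PD.mball Q (min 1 \<epsilon>) \<subseteq> U"
          proof
            fix Q' assume "Q' \<in> PD.mball Q (min 1 \<epsilon>)"
            then have Q': "Q' \<in> P" "Q \<in> P" "D Q Q' < min 1 \<epsilon>" by auto
            then obtain y where y: "y \<in> M" "Q' = orbit \<Phi> y" using P_def by auto
            have "g y Q' = 0" using gzero[OF Q'(1)] self[OF y(1)] y(2) by simp
            then have "g y Q < min 1 \<epsilon>" using Dge[OF Q'(2,1) y(1)] Q'(3) by (simp add: abs_le_iff)
            then have "Inf (e y ` Q) < min 1 \<epsilon>" unfolding g_def .
            then obtain b where b: "b \<in> Q" "e y b < min 1 \<epsilon>"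
              using cInf_lessD[of "e y ` Q"] P_ne[OF Q'(2)] by blast
            have bM: "b \<in> M" using b(1) P_ne[OF Q'(2)] by auto
            have "d b y < \<epsilon>" using b(2) commute[of b y] unfolding e_def by auto
            then have "y \<in> mball b \<epsilon>" using bM y(1) by simp
            then have "y \<in> {y \<in> M. orbit \<Phi> y \<in> U}" using \<epsilon>(2) b(1) by blast
            then show "Q' \<in> U" using y(2) by simp
          qed
        qed
      qed
    next
      assume Uo: "openin PD.mtopology U"
      then have UP: "U \<subseteq> P" and ball: "\<And>Q. Q \<in> U \<Longrightarrow> \<exists>r>0. PD.mball Q r \<subseteq> U"
        unfolding PD.openin_mtopology by auto
      have "openin mtopology {y \<in> M. orbit \<Phi> y \<in> U}"
      proof (subst openin_subopen, intro ballI)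
        fix x assume xW: "x \<in> {y \<in> M. orbit \<Phi> y \<in> U}"
        then have x: "x \<in> M" "orbit \<Phi> x \<in> U" by auto
        obtain r where r: "r > 0" "PD.mball (orbit \<Phi> x) r \<subseteq> U" using ball[OF x(2)] by blast
        define T where "T = {p \<in> topspace (prod_topology euclideanreal mtopology).
                 (\<lambda>(t, y). d (\<Phi> t y) (\<Phi> t x)) p \<in> {..<r/2}}"
        have hc: "continuous_map (prod_topology euclideanreal mtopology) euclideanreal
                 (\<lambda>p. d ((\<lambda>(t, y). \<Phi> t y) p) ((\<lambda>(t, y). \<Phi> t x) p))"
        proof -
          have c2: "continuous_map (prod_topology euclideanreal mtopology) mtopology (\<lambda>(t, y). \<Phi> t x)"
          proof -
            have "continuous_map (prod_topology euclideanreal mtopology) (prod_topology euclideanreal mtopology) (\<lambda>p. (fst p, x))"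
              using x(1) by (simp add: continuous_map_pairwise o_def continuous_map_fst)
            from continuous_map_compose[OF this cont]
            have "continuous_map (prod_topology euclideanreal mtopology) mtopology (\<lambda>p. \<Phi> (fst p) x)"
              by (simp add: o_def)
            then show ?thesis by (simp add: case_prod_beta')
          qed
          have "continuous_map (prod_topology euclideanreal mtopology) euclideanreal
                 (\<lambda>p. mdist (metric (M, d)) ((\<lambda>(t, y). \<Phi> t y) p) ((\<lambda>(t, y). \<Phi> t x) p))"
            by (rule continuous_map_mdist) (use cont c2 in auto)
          then show ?thesis by simp
        qed
        have Topen: "openin (prod_topology euclideanreal mtopology) T"
          unfolding T_def using openin_continuous_map_preimage[OF hc, of "{..<r/2}"]
          by (simp add: case_prod_beta)
        have "{0..R} \<times> {x} \<subseteq> T"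
          unfolding T_def using x(1) PhiM r(1) by auto
        then obtain U0 V where UV: "openin euclideanreal U0" "openin mtopology V" "{0..R} \<subseteq> U0"
            "x \<in> V" "U0 \<times> V \<subseteq> T"
          using tube_lemma_left[OF Topen _ _, of "{0..R}" x] x(1)
          by (auto simp: compactin_euclidean_iff)
        show "\<exists>T. openin mtopology T \<and> x \<in> T \<and> T \<subseteq> {y \<in> M. orbit \<Phi> y \<in> U}"
        proof (intro exI conjI)
          show "openin mtopology V" "x \<in> V" by (fact UV)+
          show "V \<subseteq> {y \<in> M. orbit \<Phi> y \<in> U}"
          proof
            fix y assume yV: "y \<in> V"
            have yM: "y \<in> M" using yV UV(2) openin_subset by fastforce
            have dt: "d (\<Phi> t y) (\<Phi> t x) < r/2" if "t \<in> {0..R}" for t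
            proof -
              have "(t, y) \<in> U0 \<times> V" using UV(3) that yV by blast
              then have "(t, y) \<in> T" using UV(5) by blast
              then show ?thesis unfolding T_def by simp
            qed
            have OP: "orbit \<Phi> x \<in> P" "orbit \<Phi> y \<in> P" using x(1) yM P_def by auto
            have "D (orbit \<Phi> x) (orbit \<Phi> y) \<le> r/2"
            proof (rule Dle[OF OP])
              fix z assume z: "z \<in> M"
              have "g z (orbit \<Phi> y) \<le> g z (orbit \<Phi> x) + r/2"
                using gclose[OF x(1) yM z, of "r/2"] dt commute by (simp add: less_imp_le)
              moreover have "g z (orbit \<Phi> x) \<le> g z (orbit \<Phi> y) + r/2"
                using gclose[OF yM x(1) z, of "r/2"] dt by (simp add: less_imp_le)
              ultimately show "\<bar>g z (orbit \<Phi> x) - g z (orbit \<Phi> y)\<bar> \<le> r/2" by linarith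
            qed
            then have "orbit \<Phi> y \<in> PD.mball (orbit \<Phi> x) r" using OP r(1) by simp
            then show "y \<in> {y \<in> M. orbit \<Phi> y \<in> U}" using r(2) yM by auto
          qed
        qed
      qed
      then show "openin (orbit_space X \<Phi>) U"
        unfolding openin_orbit_space topX P_def using XM UP P_def by auto
    qed
  qed
  then show ?thesis
    using MPD metrizable_space_def by blast
qed

end
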